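(* Let $R$ be a commutative ring, let $p\in\mathbb{Z}$ be a prime, and let $F(x,y)\in R[[x,y]]$ be a (one-parameter, commutative) formal group law over $R$. Let $\iota(t)\in R[[t]]$ be the inversion series of $F$ and $M_p(t)\in R[[t]]$ its multiplication-by-$p$ series. Then $$ M_p\bigl(F(x,\iota(y))\bigr)\in (x^p-y^p)R[[x,y]]+pR[[x,y]].$$
   Context: A formal group law over $R$ is a power series $F(x,y)=x+y+(\text{terms of degree}\ge2)$ satisfying associativity and commutativity; $\iota(t)$ is the unique series with $F(t,\iota(t))=0$, and $M_p(t)$ is defined by $M_1(t)=t$, $M_{n}(t)=F(M_{n-1}(t),t)$. *)

theory Defs
  imports "HOL-Computational_Algebra.Formal_Power_Series" "HOL-Computational_Algebra.Primes"
begin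

text \<open>Conventions. R[[t]] is 'a fps. R[[x,y]] is represented as 'a fps fps
 (outer variable y, inner variable x), R[[x,y,z]] as 'a fps fps fps
 (outer z, then y, innermost x).\<close>

definition coeff2 :: "'a fps fps \<Rightarrow> nat \<Rightarrow> nat \<Rightarrow> 'a" where
  "coeff2 G i j = fps_nth (fps_nth G j) i"

definition coeff3 :: "'a fps fps fps \<Rightarrow> nat \<Rightarrow> nat \<Rightarrow> nat \<Rightarrow> 'a" where
  "coeff3 G i j k = fps_nth (fps_nth (fps_nth G k) j) i"

definition X2 :: "'a::comm_ring_1 fps fps" where "X2 = fps_const fps_X"
definition Y2 :: "'a::comm_ring_1 fps fps" where "Y2 = fps_X"

definition X3 :: "'a::comm_ring_1 fps fps fps" where "X3 = fps_const (fps_const fps_X)"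
definition Y3 :: "'a::comm_ring_1 fps fps fps" where "Y3 = fps_const fps_X"
definition Z3 :: "'a::comm_ring_1 fps fps fps" where "Z3 = fps_X"

definition lift_y :: "'a::comm_ring_1 fps \<Rightarrow> 'a fps fps" where
  "lift_y s = Abs_fps (\<lambda>j. fps_const (fps_nth s j))"

text \<open>Substitution F(u,v) of series with zero constant term into a bivariate
 series F (coefficientwise finite sums; only meaningful for zero constant terms).\<close>
definition subst21 :: "'a::comm_ring_1 fps fps \<Rightarrow> 'a fps \<Rightarrow> 'a fps \<Rightarrow> 'a fps" where
  "subst21 F u v = Abs_fps (\<lambda>n. \<Sum>i\<le>n. \<Sum>j\<le>n. coeff2 F i j * fps_nth (u ^ i * v ^ j) n)"

definition subst22 :: "'a::comm_ring_1 fps fps \<Rightarrow> 'a fps fps \<Rightarrow> 'a fps fps \<Rightarrow> 'a fps fps" where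
  "subst22 F g h = Abs_fps (\<lambda>b. Abs_fps (\<lambda>a.
     \<Sum>i\<le>a+b. \<Sum>j\<le>a+b. coeff2 F i j * coeff2 (g ^ i * h ^ j) a b))"

definition subst23 :: "'a::comm_ring_1 fps fps \<Rightarrow> 'a fps fps fps \<Rightarrow> 'a fps fps fps \<Rightarrow> 'a fps fps fps" where
  "subst23 F g h = Abs_fps (\<lambda>c. Abs_fps (\<lambda>b. Abs_fps (\<lambda>a.
     \<Sum>i\<le>a+b+c. \<Sum>j\<le>a+b+c. coeff2 F i j * coeff3 (g ^ i * h ^ j) a b c)))"

text \<open>Substitution M(g) of a bivariate series g with zero constant term into a univariate M.\<close>
definition subst12 :: "'a::comm_ring_1 fps \<Rightarrow> 'a fps fps \<Rightarrow> 'a fps fps" where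
  "subst12 M g = Abs_fps (\<lambda>b. Abs_fps (\<lambda>a. \<Sum>i\<le>a+b. fps_nth M i * coeff2 (g ^ i) a b))"

definition formal_group_law :: "'a::comm_ring_1 fps fps \<Rightarrow> bool" where
  "formal_group_law F \<longleftrightarrow>
     coeff2 F 0 0 = 0 \<and> coeff2 F 1 0 = 1 \<and> coeff2 F 0 1 = 1 \<and>
     (\<forall>i j. coeff2 F i j = coeff2 F j i) \<and>
     subst23 F (subst23 F X3 Y3) Z3 = subst23 F X3 (subst23 F Y3 Z3)"

definition fgl_inv :: "'a::comm_ring_1 fps fps \<Rightarrow> 'a fps" where
  "fgl_inv F = (THE s. fps_nth s 0 = 0 \<and> subst21 F fps_X s = 0)"

fun fgl_mult :: "'a::comm_ring_1 fps fps \<Rightarrow> nat \<Rightarrow> 'a fps" where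
  "fgl_mult F 0 = 0"
| "fgl_mult F (Suc 0) = fps_X"
| "fgl_mult F (Suc (Suc n)) = subst21 F (fgl_mult F (Suc n)) fps_X"

end

theory Submission
  imports Defs
begin

unbundle fps_syntax


lemma product_composition_lemma':
  assumes c0: "c$0 = (0::'a::comm_ring_1)"
    and d0: "d$0 = 0"
  shows "((a oo c) * (b oo d))$n =
    sum (\<lambda>(k,m). a$k * b$m * (c^k * d^m) $ n) {(k,m). k + m \<le> n}"  (is "?l = ?r")
proof -
  let ?S = "{(k::nat, m::nat). k + m \<le> n}"
  have s: "?S \<subseteq> {0..n} \<times> {0..n}" by (simp add: subset_eq)
  have f: "finite {(k::nat, m::nat). k + m \<le> n}"
    by (auto intro: finite_subset[OF s])
  have "?r = (\<Sum>(k, m) \<in> {(k, m). k + m \<le> n}. \<Sum>j = 0..n. a $ k * b $ m * (c ^ k $ j * d ^ m $ (n - j)))"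
    by (simp add: fps_mult_nth sum_distrib_left)
  also have "\<dots> = (\<Sum>i = 0..n. \<Sum>(k,m)\<in>{(k,m). k+m \<le> n}. a $ k * c ^ k $ i * b $ m * d ^ m $ (n-i))"
    unfolding sum.swap [where A = "{0..n}"] by (auto simp add: field_simps intro: sum.cong)
  also have "... = (\<Sum>i = 0..n.
                    \<Sum>q = 0..i. \<Sum>j = 0..n - i. a $ q * c ^ q $ i * (b $ j * d ^ j $ (n - i)))"
    apply (rule sum.cong [OF refl])
    apply (simp add: sum.cartesian_product mult.assoc)
    apply (rule sum.mono_neutral_right[OF f], force)
    apply clarsimp
    apply (rule ccontr)
    apply (simp add: startsby_zero_power_prefix c0 d0 not_le)
    apply (erule disjE)
     apply (simp add: startsby_zero_power_prefix[OF c0])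
    apply (simp add: startsby_zero_power_prefix[OF d0])
    done
  also have "\<dots> = ?l"
    by (simp add: fps_mult_nth fps_compose_nth sum_product)
  finally show ?thesis by simp
qed

lemma fps_compose_mult_distrib':
  assumes c0: "c $ 0 = (0::'a::comm_ring_1)"
  shows "(a * b) oo c = (a oo c) * (b oo c)"
proof (clarsimp simp add: fps_eq_iff)
  fix n
  have "((a oo c) * (b oo c))$n = sum (\<lambda>s. sum (\<lambda>i. a$i * b$(s - i) * (c^s) $ n) {0..s}) {0..n}"
  unfolding product_composition_lemma'[OF c0 c0] power_add[symmetric]
  unfolding sum_pair_less_iff[where a = "\<lambda>k. a$k" and b="\<lambda>m. b$m" and c="\<lambda>s. (c ^ s)$n" and n = n] ..
  then show "(a * b oo c) $ n = ((a oo c) * (b oo c)) $ n"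
    by (simp add: fps_compose_nth fps_mult_nth sum_distrib_right)
qed

lemma fps_compose_deriv':
  fixes a :: "'a::comm_ring_1 fps"
  assumes b0: "b$0 = 0"
  shows "fps_deriv (a oo b) = ((fps_deriv a) oo b) * fps_deriv b"
proof -
  have "(fps_deriv (a oo b))$n = (((fps_deriv a) oo b) * (fps_deriv b)) $n" for n
  proof -
    have "(fps_deriv (a oo b))$n = sum (\<lambda>i. a $ i * (fps_deriv (b^i))$n) {0.. Suc n}"
      by (simp add: fps_compose_def field_simps sum_distrib_left del: of_nat_Suc)
    also have "\<dots> = sum (\<lambda>i. a$i * ((fps_const (of_nat i)) * (fps_deriv b * (b^(i - 1))))$n) {0.. Suc n}"
      by (simp add: field_simps fps_deriv_power del: fps_mult_left_const_nth of_nat_Suc)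
    also have "\<dots> = sum (\<lambda>i. of_nat i * a$i * (((b^(i - 1)) * fps_deriv b))$n) {0.. Suc n}"
      unfolding fps_mult_left_const_nth  by (simp add: field_simps)
    also have "\<dots> = sum (\<lambda>i. of_nat i * a$i * (sum (\<lambda>j. (b^ (i - 1))$j * (fps_deriv b)$(n - j)) {0..n})) {0.. Suc n}"
      unfolding fps_mult_nth ..
    also have "\<dots> = sum (\<lambda>i. of_nat i * a$i * (sum (\<lambda>j. (b^ (i - 1))$j * (fps_deriv b)$(n - j)) {0..n})) {1.. Suc n}"
      by (intro sum.mono_neutral_right) (auto simp add: mult_delta_left not_le)
    also have "\<dots> = sum (\<lambda>i. of_nat (i + 1) * a$(i+1) * (sum (\<lambda>j. (b^ i)$j * of_nat (n - j + 1) * b$(n - j + 1)) {0..n})) {0.. n}"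
      unfolding fps_deriv_nth
      by (rule sum.reindex_cong [of Suc]) (simp_all add: mult.assoc)
    finally have th0: "(fps_deriv (a oo b))$n =
      sum (\<lambda>i. of_nat (i + 1) * a$(i+1) * (sum (\<lambda>j. (b^ i)$j * of_nat (n - j + 1) * b$(n - j + 1)) {0..n})) {0.. n}" .

    have "(((fps_deriv a) oo b) * (fps_deriv b))$n = sum (\<lambda>i. (fps_deriv b)$ (n - i) * ((fps_deriv a) oo b)$i) {0..n}"
      unfolding fps_mult_nth by (simp add: ac_simps)
    also have "\<dots> = sum (\<lambda>i. sum (\<lambda>j. of_nat (n - i +1) * b$(n - i + 1) * of_nat (j + 1) * a$(j+1) * (b^j)$i) {0..n}) {0..n}"
      unfolding fps_deriv_nth fps_compose_nth sum_distrib_left mult.assoc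
      by (auto simp: subset_eq b0 startsby_zero_power_prefix sum.mono_neutral_left intro: sum.cong)
    also have "\<dots> = sum (\<lambda>i. of_nat (i + 1) * a$(i+1) * (sum (\<lambda>j. (b^ i)$j * of_nat (n - j + 1) * b$(n - j + 1)) {0..n})) {0.. n}"
      unfolding sum_distrib_left
      by (subst sum.swap) (force intro: sum.cong)
    finally show ?thesis
      unfolding th0 by simp
  qed
  then show ?thesis by (simp add: fps_eq_iff)
qed



lemma sum3:
  "(\<Sum>(k,j)\<in>{(k,j). k+j\<le>n}. \<Sum>l\<le>n-(k+j). h k l j) = (\<Sum>(k,l,j)\<in>{(k,l,j). k+l+j\<le>(n::nat)}. h k l j)"
proof -
  have fin: "finite {(k,j). k+j\<le>(n::nat)}"
    by (rule finite_subset[of _ "{..n}\<times>{..n}"]) auto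
  have "(\<Sum>(k,j)\<in>{(k,j). k+j\<le>n}. \<Sum>l\<le>n-(k+j). h k l j)
     = (\<Sum>((k,j),l)\<in>Sigma {(k,j). k+j\<le>n} (\<lambda>(k,j). {..n-(k+j)}). h k l j)"
    by (subst sum.Sigma[symmetric]) (auto simp: fin intro!: sum.cong)
  also have "\<dots> = (\<Sum>(k,l,j)\<in>{(k,l,j). k+l+j\<le>(n::nat)}. h k l j)"
    by (rule sum.reindex_bij_witness[where i="\<lambda>(k,l,j). ((k,j),l)" and j="\<lambda>((k,j),l). (k,l,j)"]) auto
  finally show ?thesis .
qed

lemma sum3':
  "(\<Sum>(k,l)\<in>{(k,l). k+l\<le>n}. \<Sum>j\<le>n-(k+l). h k l j) = (\<Sum>(k,l,j)\<in>{(k,l,j). k+l+j\<le>(n::nat)}. h k l j)"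
proof -
  have fin: "finite {(k,j). k+j\<le>(n::nat)}"
    by (rule finite_subset[of _ "{..n}\<times>{..n}"]) auto
  have "(\<Sum>(k,l)\<in>{(k,l). k+l\<le>n}. \<Sum>j\<le>n-(k+l). h k l j)
     = (\<Sum>((k,l),j)\<in>Sigma {(k,l). k+l\<le>n} (\<lambda>(k,l). {..n-(k+l)}). h k l j)"
    by (subst sum.Sigma[symmetric]) (auto simp: fin intro!: sum.cong)
  also have "\<dots> = (\<Sum>(k,l,j)\<in>{(k,l,j). k+l+j\<le>(n::nat)}. h k l j)"
    by (rule sum.reindex_bij_witness[where i="\<lambda>(k,l,j). ((k,l),j)" and j="\<lambda>((k,l),j). (k,l,j)"]) auto
  finally show ?thesis .
qed

definition dg :: "'a::comm_ring_1 fps fps \<Rightarrow> 'a fps" where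
  "dg A = Abs_fps (\<lambda>n. \<Sum>j\<le>n. A$j$(n-j))"

lemma dg_nth: "dg A $ n = (\<Sum>j\<le>n. A$j$(n-j))"
  by (simp add: dg_def)

lemma dg_mult: "dg (A * B) = dg A * dg B"
proof (rule fps_ext)
  fix n
  have "dg (A*B) $ n = (\<Sum>b\<le>n. \<Sum>k\<le>b. \<Sum>l\<le>n-b. A$k$l * B$(b-k)$(n-b-l))"
    by (simp add: dg_nth fps_mult_nth fps_sum_nth atLeast0AtMost sum_distrib_left)
  also have "\<dots> = (\<Sum>(k,j)\<in>{(k,j). k+j\<le>n}. \<Sum>l\<le>n-(k+j). A$k$l * B$j$(n-(k+j)-l))"
    by (subst sum.triangle_reindex_eq) (auto intro!: sum.cong)
  also have "\<dots> = (\<Sum>(k,l,j)\<in>{(k,l,j). k+l+j\<le>n}. A$k$l * B$j$(n-(k+j)-l))"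
    by (rule sum3)
  also have "\<dots> = (\<Sum>(k,l,j)\<in>{(k,l,j). k+l+j\<le>n}. A$k$l * B$j$(n-(k+l)-j))"
    by (rule sum.cong[OF refl]) (clarsimp simp: diff_diff_left add.commute add.left_commute)
  also have "\<dots> = (\<Sum>(k,l)\<in>{(k,l). k+l\<le>n}. \<Sum>j\<le>n-(k+l). A$k$l * B$j$(n-(k+l)-j))"
    by (rule sum3'[symmetric])
  also have "\<dots> = (\<Sum>m\<le>n. \<Sum>k\<le>m. \<Sum>j\<le>n-m. A$k$(m-k) * B$j$(n-m-j))"
    by (subst sum.triangle_reindex_eq) (auto intro!: sum.cong simp: algebra_simps)
  also have "\<dots> = (dg A * dg B) $ n"
    by (simp add: dg_nth fps_mult_nth atLeast0AtMost sum_product)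
  finally show "dg (A*B) $ n = (dg A * dg B) $ n" .
qed

lemma dg_add: "dg (A + B) = dg A + dg B"
  by (rule fps_ext) (simp add: dg_nth sum.distrib)

lemma dg_diff: "dg (A - B) = dg A - dg B"
  by (rule fps_ext) (simp add: dg_nth sum_subtractf)

lemma dg_const: "dg (fps_const c) = c"
proof (rule fps_ext)
  fix n
  have "\<And>j. (fps_const c) $ j $ (n-j) = (if j = 0 then c$n else 0)" by simp
  then show "dg (fps_const c) $ n = c $ n" by (simp add: dg_nth)
qed

lemma dg_1: "dg 1 = 1"
  using dg_const[of 1] by simp

lemma dg_0: "dg 0 = 0"
  by (rule fps_ext) (simp add: dg_nth)

lemma dg_power: "dg (A ^ k) = dg A ^ k"
  by (induct k) (simp_all add: dg_1 dg_mult)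

lemma dg_sum: "dg (sum f S) = sum (\<lambda>i. dg (f i)) S"
  by (induct S rule: infinite_finite_induct) (simp_all add: dg_0 dg_add)



definition mapc :: "('a \<Rightarrow> 'b) \<Rightarrow> 'a fps \<Rightarrow> 'b fps" where
  "mapc h A = Abs_fps (\<lambda>j. h (A$j))"

lemma mapc_nth[simp]: "mapc h A $ j = h (A $ j)"
  by (simp add: mapc_def)

lemma hom_sum:
  assumes hadd: "\<And>x y. h (x + y) = h x + h y" and h0: "h 0 = 0"
  shows "h (sum f S) = sum (\<lambda>i. h (f i)) S"
  by (induct S rule: infinite_finite_induct) (simp_all add: hadd h0)

lemma mapc_mult:
  assumes hadd: "\<And>x y. h (x + y) = h x + h y" and h0: "h 0 = 0"
    and hmul: "\<And>x y. h (x * y) = h x * h y"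
  shows "mapc h (A * B) = mapc h A * mapc h B"
  by (rule fps_ext) (simp add: fps_mult_nth hom_sum[of h, OF hadd h0] hmul)

lemma mapc_add:
  assumes hadd: "\<And>x y. h (x + y) = h x + h y"
  shows "mapc h (A + B) = mapc h A + mapc h B"
  by (rule fps_ext) (simp add: hadd)

definition ev :: "'a::comm_ring_1 fps \<Rightarrow> 'a fps fps \<Rightarrow> 'a fps" where
  "ev u A = dg (mapc (\<lambda>a. a oo u) A)"

lemma ev_nth: "ev u A $ n = (\<Sum>j\<le>n. \<Sum>i\<le>n-j. A$j$i * (u^i)$(n-j))"
  by (simp add: ev_def dg_nth fps_compose_nth atLeast0AtMost)

lemma ev_mult: "u$0 = 0 \<Longrightarrow> ev u (A * B) = ev u A * ev u B"
  unfolding ev_def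
  by (subst mapc_mult) (simp_all add: fps_compose_add_distrib fps_compose_mult_distrib' dg_mult)

lemma ev_add: "ev u (A + B) = ev u A + ev u B"
  unfolding ev_def
  by (subst mapc_add) (simp_all add: fps_compose_add_distrib dg_add)

lemma ev_0: "ev u 0 = 0"
  by (rule fps_ext) (simp add: ev_nth)

lemma ev_sum: "ev u (sum f S) = sum (\<lambda>i. ev u (f i)) S"
  by (induct S rule: infinite_finite_induct) (simp_all add: ev_0 ev_add)

lemma ev_const: "ev u (fps_const a) = a oo u"
  unfolding ev_def
proof -
  have "mapc (\<lambda>a. a oo u) (fps_const a) = fps_const (a oo u)"
    by (rule fps_ext) simp
  then show "dg (mapc (\<lambda>a. a oo u) (fps_const a)) = a oo u" by (simp add: dg_const)
qed

lemma ev_1: "ev u 1 = 1"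
  using ev_const[of u 1] by simp

lemma ev_power: "u$0 = 0 \<Longrightarrow> ev u (A ^ k) = ev u A ^ k"
  by (induct k) (simp_all add: ev_1 ev_mult)

lemma ev_cmult: "u$0 = 0 \<Longrightarrow> ev u (fps_const (fps_const c) * A) = fps_const c * ev u A"
  by (simp add: ev_mult ev_const)

lemma ev_local:
  assumes "\<And>i j. i + j \<le> n \<Longrightarrow> A$j$i = B$j$i"
  shows "ev u A $ n = ev u B $ n"
  unfolding ev_nth using assms by (intro sum.cong refl) auto

lemma ev_subst21:
  assumes u0: "u$0 = 0"
  shows "subst21 A u fps_X = ev u A"
proof (rule fps_ext)
  fix n
  have "subst21 A u fps_X $ n = (\<Sum>i\<le>n. \<Sum>j\<le>n. A$j$i * (u^i)$(n-j))"
    by (simp add: subst21_def coeff2_def fps_X_power_mult_right_nth)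
  also have "\<dots> = (\<Sum>j\<le>n. \<Sum>i\<le>n. A$j$i * (u^i)$(n-j))"
    by (rule sum.swap)
  also have "\<dots> = (\<Sum>j\<le>n. \<Sum>i\<le>n-j. A$j$i * (u^i)$(n-j))"
  proof (rule sum.cong[OF refl])
    fix j assume "j \<in> {..n}"
    show "(\<Sum>i\<le>n. A$j$i * (u^i)$(n-j)) = (\<Sum>i\<le>n-j. A$j$i * (u^i)$(n-j))"
      by (rule sum.mono_neutral_right) (auto simp: startsby_zero_power_prefix[OF u0])
  qed
  finally show "subst21 A u fps_X $ n = ev u A $ n" by (simp add: ev_nth)
qed



lemma of_nat_mult_nth: "(of_nat k * f) $ n = of_nat k * (f $ n :: 'a::comm_ring_1)"
  by (simp add: fps_of_nat[symmetric])

lemma of_nat_compose: "(of_nat k :: 'a::comm_ring_1 fps) oo u = of_nat k"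
  by (metis fps_const_compose fps_of_nat)

lemma of_nat_mult_compose: "u$0 = 0 \<Longrightarrow> (of_nat k * a :: 'a::comm_ring_1 fps) oo u = of_nat k * (a oo u)"
  by (simp add: fps_compose_mult_distrib' of_nat_compose)

lemma dg_deriv: "fps_deriv (dg C) = dg (mapc fps_deriv C + fps_deriv C)"
proof (rule fps_ext)
  fix n
  have "fps_deriv (dg C) $ n = of_nat (Suc n) * (\<Sum>j\<le>Suc n. C$j$(Suc n-j))"
    by (simp add: dg_nth)
  also have "\<dots> = (\<Sum>j\<le>Suc n. of_nat (Suc n - j) * C$j$(Suc n-j)) + (\<Sum>j\<le>Suc n. of_nat j * C$j$(Suc n-j))"
  proof -
    have "of_nat (Suc n) * (\<Sum>j\<le>Suc n. C$j$(Suc n-j)) = (\<Sum>j\<le>Suc n. (of_nat (Suc n - j) + of_nat j) * C$j$(Suc n-j))"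
      unfolding sum_distrib_left
    proof (rule sum.cong[OF refl])
      fix j assume "j \<in> {..Suc n}"
      then have "of_nat (Suc n) = (of_nat (Suc n - j) + of_nat j :: 'a)"
        by (simp flip: of_nat_add)
      then show "of_nat (Suc n) * C$j$(Suc n-j) = (of_nat (Suc n - j) + of_nat j) * C$j$(Suc n-j)" by (simp only:)
    qed
    then show ?thesis by (simp only: distrib_right sum.distrib)
  qed
  also have "(\<Sum>j\<le>Suc n. of_nat (Suc n - j) * C$j$(Suc n-j)) = (\<Sum>j\<le>n. of_nat (n - j + 1) * C$j$(n-j+1))"
    by (auto simp: Suc_diff_le algebra_simps intro!: sum.cong)
  also have "(\<Sum>j\<le>Suc n. of_nat j * C$j$(Suc n-j)) = (\<Sum>j\<le>n. of_nat (j+1) * C$(j+1)$(n-j))"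
    by (subst sum.atMost_Suc_shift) simp
  finally show "fps_deriv (dg C) $ n = dg (mapc fps_deriv C + fps_deriv C) $ n"
    by (simp add: dg_nth sum.distrib of_nat_mult_nth del: of_nat_Suc)
qed

lemma ev_deriv:
  assumes u0: "u$0 = 0"
  shows "fps_deriv (ev u A) = ev u (mapc fps_deriv A) * fps_deriv u + ev u (fps_deriv A)"
proof -
  have 1: "mapc fps_deriv (mapc (\<lambda>a. a oo u) A) = mapc (\<lambda>a. a oo u) (mapc fps_deriv A) * fps_const (fps_deriv u)"
    by (rule fps_ext) (simp add: fps_compose_deriv'[OF u0])
  have 2: "fps_deriv (mapc (\<lambda>a. a oo u) A) = mapc (\<lambda>a. a oo u) (fps_deriv A)"
    by (rule fps_ext) (simp add: of_nat_mult_compose[OF u0] del: of_nat_Suc)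
  show ?thesis
    unfolding ev_def dg_deriv 1 2 dg_add dg_mult dg_const ..
qed



lemma mapc_power:
  assumes hadd: "\<And>x y. h (x + y) = h x + h y" and h0: "h 0 = 0"
    and hmul: "\<And>x y. h (x * y) = h x * h y" and h1: "h 1 = 1"
  shows "mapc h (A ^ k) = mapc h A ^ k"
proof (induct k)
  case 0
  show ?case by (rule fps_ext) (simp add: h1 h0)
next
  case (Suc k)
  then show ?case by (simp add: mapc_mult[OF hadd h0 hmul])
qed

definition HH :: "'a::comm_ring_1 fps fps \<Rightarrow> 'a fps fps fps" where
  "HH F = mapc (mapc fps_const) F"

lemma HH_power: "HH F ^ j = HH (F ^ j)"
proof -
  have a: "mapc fps_const (x + y) = mapc fps_const x + mapc fps_const (y::'a fps)" for x y
    by (rule fps_ext) simp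
  have m: "mapc fps_const (x * y) = mapc fps_const x * mapc fps_const (y::'a fps)" for x y
    by (rule mapc_mult) simp_all
  have o: "mapc fps_const (1::'a fps) = 1"
    by (rule fps_ext) simp
  have z: "mapc fps_const (0::'a fps) = 0"
    by (rule fps_ext) simp
  show ?thesis unfolding HH_def
    by (rule mapc_power[symmetric]) (simp_all add: a m o z)
qed

lemma HH_nth: "HH F $ c $ b $ a = (if a = 0 then F $ c $ b else 0)"
  by (simp add: HH_def)

lemma subst23_nth:
  "subst23 F g h $ c $ b $ a = (\<Sum>i\<le>a+b+c. \<Sum>j\<le>a+b+c. F$j$i * (g ^ i * h ^ j) $ c $ b $ a)"
  by (simp add: subst23_def coeff2_def coeff3_def)

lemma sum_delta2:
  assumes "a \<le> (N::nat)" "b \<le> N"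
  shows "(\<Sum>i\<le>N. \<Sum>j\<le>N. if b = j \<and> a = i then f j i else 0) = f b a"
proof -
  have "\<And>i. (\<Sum>j\<le>N. if b = j \<and> a = i then f j i else 0) = (if a = i then f b i else 0)"
    using assms by (case_tac "a = i") (simp_all add: sum.delta')
  then show ?thesis using assms by (simp add: sum.delta')
qed

lemma T1: "subst23 F X3 Y3 = fps_const F"
proof (intro fps_ext)
  fix c b a
  have "subst23 F X3 Y3 $ c $ b $ a = (\<Sum>i\<le>a+b+c. \<Sum>j\<le>a+b+c. F$j$i * (if c = 0 \<and> b = j \<and> a = i then 1 else 0))"
    by (auto simp: subst23_nth X3_def Y3_def fps_X_power_mult_nth fps_X_power_nth intro!: sum.cong)
  also have "\<dots> = (if c = 0 then F$b$a else 0)"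
    by (simp add: if_distrib[of "\<lambda>x. _ * x"] sum_delta2 cong: if_cong) 
  finally show "subst23 F X3 Y3 $ c $ b $ a = fps_const F $ c $ b $ a" by simp
qed

lemma T2: "subst23 F Y3 Z3 = HH F"
proof (intro fps_ext)
  fix c b a
  have "subst23 F Y3 Z3 $ c $ b $ a = (\<Sum>i\<le>a+b+c. \<Sum>j\<le>a+b+c. F$j$i * (if c = j \<and> b = i \<and> a = 0 then 1 else 0))"
    by (auto simp: subst23_nth Y3_def Z3_def fps_X_power_nth intro!: sum.cong)
  also have "\<dots> = (if a = 0 then F$c$b else 0)"
    by (simp add: if_distrib[of "\<lambda>x. _ * x"] sum_delta2 cong: if_cong) 
  finally show "subst23 F Y3 Z3 $ c $ b $ a = HH F $ c $ b $ a" by (simp add: HH_nth)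
qed



lemma AC:
  assumes assoc: "subst23 F (subst23 F X3 Y3) Z3 = subst23 F X3 (subst23 F Y3 Z3)"
  shows "(\<Sum>i\<le>a+b+c. F$c$i * (F^i)$b$a) = (\<Sum>j\<le>a+b+c. F$j$a * (F^j)$c$b)"
proof -
  have "subst23 F (fps_const F) Z3 $ c $ b $ a = (\<Sum>i\<le>a+b+c. \<Sum>j\<le>a+b+c. F$j$i * (if c = j then (F^i)$b$a else 0))"
    by (auto simp: subst23_nth Z3_def fps_X_power_nth intro!: sum.cong)
  also have "\<dots> = (\<Sum>i\<le>a+b+c. F$c$i * (F^i)$b$a)"
    by (simp add: if_distrib[of "\<lambda>x. _ * x"] sum.delta cong: if_cong)
  finally have L: "subst23 F (fps_const F) Z3 $ c $ b $ a = (\<Sum>i\<le>a+b+c. F$c$i * (F^i)$b$a)" .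
  have "subst23 F X3 (HH F) $ c $ b $ a = (\<Sum>i\<le>a+b+c. \<Sum>j\<le>a+b+c. F$j$i * (if i = a then (F^j)$c$b else 0))"
    by (auto simp: subst23_nth X3_def HH_power fps_X_power_mult_nth HH_nth intro!: sum.cong)
  also have "\<dots> = (\<Sum>j\<le>a+b+c. F$j$a * (F^j)$c$b)"
    by (subst sum.swap) (simp add: if_distrib[of "\<lambda>x. _ * x"] sum.delta' cong: if_cong)
  finally have R: "subst23 F X3 (HH F) $ c $ b $ a = (\<Sum>j\<le>a+b+c. F$j$a * (F^j)$c$b)" .
  from assoc have "subst23 F (fps_const F) Z3 = subst23 F X3 (HH F)" by (simp add: T1 T2)
  then show ?thesis using L R by simp
qed



lemma order_power:
  assumes A0: "A$0$0 = 0"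
  shows "a + b < k \<Longrightarrow> (A^k)$b$a = 0"
proof (induct k arbitrary: a b)
  case 0 then show ?case by simp
next
  case (Suc k)
  have "(A^Suc k)$b$a = (\<Sum>q=0..b. \<Sum>r=0..a. A$q$r * (A^k)$(b-q)$(a-r))"
    by (simp add: fps_mult_nth fps_sum_nth)
  also have "\<dots> = 0"
  proof (intro sum.neutral ballI)
    fix q r assume q: "q \<in> {0..b}" and r: "r \<in> {0..a}"
    show "A$q$r * (A^k)$(b-q)$(a-r) = 0"
    proof (cases "q = 0 \<and> r = 0")
      case True then show ?thesis using A0 by simp
    next
      case False
      then have "(a - r) + (b - q) < k" using Suc.prems q r by auto
      then show ?thesis using Suc.hyps by simp
    qed
  qed
  finally show ?case .
qed

lemma power_nth_1: "(A^j)$1 = of_nat j * (A$0)^(j-1) * (A$1 :: 'a::comm_ring_1)"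
proof (induct j)
  case 0 then show ?case by simp
next
  case (Suc j)
  have "(A^Suc j)$1 = A$0 * (A^j)$1 + A$1 * (A^j)$0"
    by (simp add: fps_mult_nth)
  also have "\<dots> = of_nat (Suc j) * (A$0)^j * A$1"
    using Suc by (cases j) (simp_all add: fps_power_zeroth algebra_simps)
  finally show ?case by simp
qed

lemma fX:
  assumes f0: "f$0 = 0" and f1: "f$1 = (1::'a::comm_ring_1)" and ff: "f oo f = f"
  shows "f = fps_X"
proof -
  have "f$m = fps_X$m" for m
  proof (induct m rule: less_induct)
    case (less m)
    show ?case
    proof (cases "m \<le> 1")
      case True then show ?thesis using f0 f1 by (cases m) auto
    next
      case False
      have "f$m = (f oo f)$m" using ff by simp
      also have "\<dots> = (\<Sum>i\<in>{0..<m}. f$i * (f^i)$m) + f$m * (f^m)$m"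
        by (simp add: fps_compose_nth atLeastLessThanSuc_atLeastAtMost[symmetric] del: atLeastLessThanSuc_atLeastAtMost)
      also have "(\<Sum>i\<in>{0..<m}. f$i * (f^i)$m) = (\<Sum>i\<in>{0..<m}. (if i = 1 then (f^i)$m else 0))"
        using less by (intro sum.cong refl) (simp add: fps_X_nth)
      also have "\<dots> = f$m" using False by simp
      also have "(f^m)$m = (f$1)^m" by (rule startsby_zero_power_nth_same[OF f0])
      also have "\<dots> = 1" by (simp only: f1 power_one)
      finally have "f$m = f$m + f$m" by simp
      then show ?thesis using False by simp
    qed
  qed
  then show ?thesis by (simp add: fps_eq_iff)
qed

locale fgl =
  fixes F :: "'a::comm_ring_1 fps fps"
  assumes fgl: "formal_group_law F"
begin

lemma F00: "F$0$0 = 0" using fgl by (simp add: formal_group_law_def coeff2_def)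
lemma F01: "F$0$1 = 1" using fgl by (simp add: formal_group_law_def coeff2_def)
lemma F10: "F$1$0 = 1" using fgl by (simp add: formal_group_law_def coeff2_def)
lemma Fsym: "F$j$i = F$i$j" using fgl by (simp add: formal_group_law_def coeff2_def)
lemma assoc: "subst23 F (subst23 F X3 Y3) Z3 = subst23 F X3 (subst23 F Y3 Z3)"
  using fgl by (simp add: formal_group_law_def)

lemma Fzero: "F$0 = fps_X"
proof (rule fX)
  show "F$0$0 = 0" by (rule F00)
  show "F$0$1 = 1" by (rule F01)
  show "F$0 oo F$0 = F$0"
  proof (rule fps_ext)
    fix a
    have "(\<Sum>i\<le>a+0+0. F$0$i * (F^i)$0$a) = (\<Sum>j\<le>a+0+0. F$j$a * (F^j)$0$0)"
      by (rule AC[OF assoc])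
    moreover have "(\<Sum>j\<le>a. F$j$a * (F^j)$0$0) = F$0$a"
      by (simp add: fps_power_zeroth F00 zero_power sum.atMost_shift del: power_Suc)
    ultimately show "(F$0 oo F$0)$a = F$0$a"
      by (simp add: fps_compose_nth fps_power_zeroth atLeast0AtMost)
  qed
qed

end


lemma lift_y_nth: "lift_y s $ j $ i = (if i = 0 then s$j else 0)"
  by (simp add: lift_y_def)

lemma subst12_nth: "subst12 M g $ b $ a = (\<Sum>i\<le>a+b. M$i * (g^i)$b$a)"
  by (simp add: subst12_def coeff2_def)

context fgl begin

lemma Fj0: "F$j$0 = (if j = 1 then 1 else 0)"
  using Fsym[of j 0] Fzero by (simp add: fps_X_nth)

lemma Q1: "fps_deriv F * lift_y (F$1) = subst12 (F$1) F"
proof (intro fps_ext)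
  fix b a
  let ?P = "F$1"
  have L: "(fps_deriv F * lift_y ?P)$b$a = (\<Sum>k\<le>b. of_nat (k+1) * F$(k+1)$a * ?P$(b-k))"
  proof -
    have "\<And>k. (fps_deriv F $ k * lift_y ?P $ (b - k)) $ a = of_nat (k+1) * F$(k+1)$a * ?P$(b-k)"
    proof -
      fix k
      have "lift_y ?P $ (b-k) = fps_const (?P$(b-k))" by (rule fps_ext) (simp add: lift_y_nth)
      then show "(fps_deriv F $ k * lift_y ?P $ (b - k)) $ a = of_nat (k+1) * F$(k+1)$a * ?P$(b-k)"
        by (simp add: of_nat_mult_nth del: of_nat_Suc)
    qed
    then show ?thesis by (simp add: fps_mult_nth fps_sum_nth atLeast0AtMost del: of_nat_Suc)
  qed
  have ac: "(\<Sum>i\<le>a+b+1. F$1$i * (F^i)$b$a) = (\<Sum>j\<le>a+b+1. F$j$a * (F^j)$1$b)"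
    by (rule AC[OF assoc])
  have l: "(\<Sum>i\<le>a+b+1. F$1$i * (F^i)$b$a) = subst12 ?P F $ b $ a"
    using order_power[OF F00, of a b "Suc (a+b)"] by (simp add: subst12_nth)
  have "(\<Sum>j\<le>a+b+1. F$j$a * (F^j)$1$b) = (\<Sum>j\<le>a+b+1. F$j$a * (of_nat j * (if b < j - 1 then 0 else ?P$(b-(j-1)))))"
  proof (intro sum.cong refl)
    fix j
    have "(F^j)$1 = of_nat j * (fps_X^(j-1) * ?P)"
      using power_nth_1[of F j] Fzero by (simp only: mult.assoc)
    then have "(F^j)$1$b = of_nat j * (fps_X^(j-1) * ?P)$b"
      by (simp only: of_nat_mult_nth)
    then show "F$j$a * (F^j)$1$b = F$j$a * (of_nat j * (if b < j - 1 then 0 else ?P$(b-(j-1))))"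
      by (simp only: fps_X_power_mult_nth)
  qed
  also have "\<dots> = (\<Sum>k\<le>a+b. F$(Suc k)$a * (of_nat (Suc k) * (if b < k then 0 else ?P$(b-k))))"
    by (simp only: Suc_eq_plus1[symmetric] sum.atMost_Suc_shift) (auto intro!: sum.cong)
  also have "\<dots> = (\<Sum>k\<le>b. F$(Suc k)$a * (of_nat (Suc k) * (if b < k then 0 else ?P$(b-k))))"
    by (rule sum.mono_neutral_right) auto
  also have "\<dots> = (\<Sum>k\<le>b. of_nat (k+1) * F$(k+1)$a * ?P$(b-k))"
    by (intro sum.cong refl) (simp add: algebra_simps)
  finally show "(fps_deriv F * lift_y ?P)$b$a = subst12 ?P F $ b $ a"
    using L ac l by simp
qed

end


definition swp :: "'a::comm_ring_1 fps fps \<Rightarrow> 'a fps fps" where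
  "swp A = Abs_fps (\<lambda>j. Abs_fps (\<lambda>i. A$i$j))"

lemma swp_nth[simp]: "swp A $ j $ i = A $ i $ j"
  by (simp add: swp_def)

lemma swp_mult: "swp (A * B) = swp A * swp B"
proof (intro fps_ext)
  fix j i
  show "swp (A * B) $ j $ i = (swp A * swp B) $ j $ i"
    by (simp add: fps_mult_nth fps_sum_nth sum_distrib_left) (rule sum.swap)
qed

lemma swp_1: "swp 1 = 1"
  by (intro fps_ext) simp

lemma swp_power: "swp (A ^ k) = swp A ^ k"
  by (induct k) (simp_all add: swp_1 swp_mult)

lemma swp_lift: "swp (lift_y s) = fps_const s"
  by (intro fps_ext) (simp add: lift_y_nth)

lemma swp_deriv: "swp (fps_deriv A) = mapc fps_deriv (swp A)"
  by (intro fps_ext) (simp add: of_nat_mult_nth del: of_nat_Suc)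

lemma swp_subst12: "swp (subst12 M A) = subst12 M (swp A)"
  by (intro fps_ext) (simp add: subst12_nth swp_power[symmetric] add.commute)

context fgl begin

lemma swpF: "swp F = F"
  by (intro fps_ext) (simp add: Fsym)

lemma Q2: "mapc fps_deriv F * fps_const (F$1) = subst12 (F$1) F"
  using arg_cong[OF Q1, of swp] by (simp add: swp_mult swp_lift swp_deriv swp_subst12 swpF)

end


lemma ev_subst12:
  assumes u0: "u$0 = 0" and A0: "A$0$0 = 0"
  shows "ev u (subst12 M A) = M oo ev u A"
proof (rule fps_ext)
  fix n
  let ?S = "\<Sum>k\<le>n. fps_const (fps_const (M$k)) * A^k"
  have "ev u (subst12 M A) $ n = ev u ?S $ n"
  proof (rule ev_local)
    fix i j assume ij: "i + j \<le> n"
    have "subst12 M A $ j $ i = (\<Sum>k\<le>i+j. M$k * (A^k)$j$i)" by (simp add: subst12_nth)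
    also have "\<dots> = (\<Sum>k\<le>n. M$k * (A^k)$j$i)"
      using ij by (intro sum.mono_neutral_left) (auto simp: order_power[OF A0])
    also have "\<dots> = ?S $ j $ i" by (simp add: fps_sum_nth)
    finally show "subst12 M A $ j $ i = ?S $ j $ i" .
  qed
  also have "ev u ?S = (\<Sum>k\<le>n. fps_const (M$k) * ev u A ^ k)"
    by (simp add: ev_sum ev_cmult[OF u0] ev_power[OF u0])
  also have "\<dots> $ n = (M oo ev u A) $ n"
    by (simp add: fps_sum_nth fps_compose_nth atLeast0AtMost)
  finally show "ev u (subst12 M A) $ n = (M oo ev u A) $ n" .
qed

lemma ev_lift: "ev u (lift_y s) = s"
proof (rule fps_ext)
  fix n
  have "ev u (lift_y s) $ n = (\<Sum>j\<le>n. s$j * (if j = n then 1 else 0))"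
  proof (unfold ev_nth, intro sum.cong refl)
    fix j assume "j \<in> {..n}"
    then show "(\<Sum>i\<le>n-j. lift_y s$j$i * (u^i)$(n-j)) = s$j * (if j = n then 1 else 0)"
      by (simp add: lift_y_nth if_distrib[of "\<lambda>x. x * _"] sum.delta cong: if_cong)
  qed
  also have "\<dots> = s $ n" by (simp add: if_distrib[of "\<lambda>x. _ * x"] sum.delta' cong: if_cong)
  finally show "ev u (lift_y s) $ n = s $ n" .
qed

lemma ev_nth0: "ev u A $ 0 = A$0$0"
  by (simp add: ev_nth)

context fgl begin

lemma K1: "u$0 = 0 \<Longrightarrow> F$1 * ev u (fps_deriv F) = (F$1) oo ev u F"
  using arg_cong[OF Q1, of "ev u"] by (simp add: ev_mult ev_lift ev_subst12 F00 mult.commute)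

lemma K2: "u$0 = 0 \<Longrightarrow> ((F$1) oo u) * ev u (mapc fps_deriv F) = (F$1) oo ev u F"
  using arg_cong[OF Q2, of "ev u"] by (simp add: ev_mult ev_const ev_subst12 F00 mult.commute)

lemma mult_deriv:
  "(fgl_mult F n)$0 = 0 \<and> F$1 * fps_deriv (fgl_mult F n) = of_nat n * ((F$1) oo fgl_mult F n)"
proof (cases n)
  case 0 then show ?thesis by simp
next
  case (Suc m)
  have "(fgl_mult F (Suc m))$0 = 0 \<and> F$1 * fps_deriv (fgl_mult F (Suc m)) = of_nat (Suc m) * ((F$1) oo fgl_mult F (Suc m))"
  proof (induct m)
    case 0 then show ?case by simp
  next
    case (Suc m)
    let ?u = "fgl_mult F (Suc m)"
    let ?P = "F$1"
    have u0: "?u$0 = 0" using Suc by simp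
    have e: "fgl_mult F (Suc (Suc m)) = ev ?u F" by (simp add: ev_subst21[OF u0])
    have "?P * fps_deriv (ev ?u F) = ev ?u (mapc fps_deriv F) * (?P * fps_deriv ?u) + ?P * ev ?u (fps_deriv F)"
      by (simp add: ev_deriv[OF u0] algebra_simps)
    also have "\<dots> = of_nat (Suc m) * ((?P oo ?u) * ev ?u (mapc fps_deriv F)) + (?P oo ev ?u F)"
      using Suc K1[OF u0] by (simp add: algebra_simps)
    also have "\<dots> = of_nat (Suc (Suc m)) * (?P oo ev ?u F)"
      using K2[OF u0] by (simp add: algebra_simps)
    finally show ?case using e by (simp add: ev_nth0 F00)
  qed
  then show ?thesis using Suc by simp
qed

end


lemma dvd_from_unit:
  fixes P D Q :: "'a::comm_ring_1 fps"
  assumes P0: "P$0 = 1" and eq: "P * D = of_nat p * Q"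
  shows "of_nat p dvd D$n"
proof (induct n rule: less_induct)
  case (less n)
  have "(P * D)$n = D$n + (\<Sum>i\<in>{1..n}. P$i * D$(n-i))"
  proof -
    have "(P * D)$n = (\<Sum>i\<in>insert 0 {1..n}. P$i * D$(n-i))"
      by (simp only: fps_mult_nth Icc_eq_insert_lb_nat[OF le0] One_nat_def)
    then show ?thesis by (simp add: P0)
  qed
  moreover have "(P * D)$n = of_nat p * Q$n" using eq by (simp add: of_nat_mult_nth)
  ultimately have "D$n = of_nat p * Q$n - (\<Sum>i\<in>{1..n}. P$i * D$(n-i))"
    by (simp add: algebra_simps)
  moreover have "of_nat p dvd (\<Sum>i\<in>{1..n}. P$i * D$(n-i))"
  proof (rule dvd_sum)
    fix i assume "i \<in> {1..n}"
    then have "n - i < n" by auto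
    then show "of_nat p dvd P$i * D$(n-i)" by (rule dvd_mult[OF less])
  qed
  ultimately show ?case by simp
qed

context fgl begin

lemma mult_coeffs:
  assumes p: "prime p"
  shows "(fgl_mult F p)$0 = 0" and "\<And>k. \<not> p dvd k \<Longrightarrow> of_nat p dvd (fgl_mult F p)$k"
proof -
  let ?M = "fgl_mult F p"
  show "?M$0 = 0" using mult_deriv by blast
  fix k assume nd: "\<not> p dvd k"
  then have k0: "k \<noteq> 0" by (metis dvd_0_right)
  have "F$1$0 = 1" using F10 by simp
  then have dv: "of_nat p dvd (fps_deriv ?M)$(k-1)"
    using mult_deriv[of p] by (intro dvd_from_unit[of "F$1" _ p "(F$1) oo ?M"]) auto
  have "(fps_deriv ?M)$(k-1) = of_nat k * ?M$k" using k0 by simp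
  with dv have dk: "of_nat p dvd (of_nat k * ?M$k :: 'a)" by simp
  have "coprime p k" using prime_imp_coprime[OF p nd] .
  then have "gcd (int k) (int p) = 1" by (simp add: gcd_int_def coprime_commute coprime_iff_gcd_eq_1)
  then obtain x y where xy: "x * int k + y * int p = 1" using bezout_int[of "int k" "int p"] by auto
  then have "(of_int (x * int k + y * int p) :: 'a) = of_int 1" by (simp only: xy)
  then have xy': "of_int x * of_nat k + of_int y * of_nat p = (1::'a)"
    by (simp only: of_int_add of_int_mult of_int_of_nat_eq of_int_1)
  have "?M$k = of_int x * (of_nat k * ?M$k) + of_nat p * (of_int y * ?M$k)"
    using arg_cong[OF xy', of "\<lambda>z. z * ?M$k"] by (simp add: algebra_simps)
  moreover have "of_nat p dvd of_int x * (of_nat k * ?M$k) + of_nat p * (of_int y * ?M$k)"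
    using dk by (intro dvd_add dvd_triv_left) (rule dvd_mult)
  ultimately show "of_nat p dvd ?M$k" by simp
qed

end


lemma pow_local:
  assumes "\<And>k. k \<le> n \<Longrightarrow> g$k = h$k"
  shows "(g^j)$n = (h^j)$(n::nat)"
  using assms
proof (induct j arbitrary: n)
  case 0 then show ?case by simp
next
  case (Suc j)
  have "\<And>i. i \<in> {0..n} \<Longrightarrow> g$i * (g^j)$(n-i) = h$i * (h^j)$(n-i)"
  proof -
    fix i assume "i \<in> {0..n}"
    then have "g$i = h$i" "(g^j)$(n-i) = (h^j)$(n-i)"
      using Suc.prems by (auto intro!: Suc.hyps)
    then show "g$i * (g^j)$(n-i) = h$i * (h^j)$(n-i)" by simp
  qed
  then have "(\<Sum>i=0..n. g$i * (g^j)$(n-i)) = (\<Sum>i=0..n. h$i * (h^j)$(n-i))"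
    by (rule sum.cong[OF refl])
  then show ?case by (simp add: fps_mult_nth)
qed

lemma pow_top:
  assumes g0: "g$0 = 0" and h0: "h$0 = 0" and n1: "1 \<le> n" and eq: "\<And>k. k < n \<Longrightarrow> g$k = h$k"
  shows "(g^j)$n = (h^j)$n + (if j = 1 then g$n - h$n else (0::'a::comm_ring_1))"
proof (cases "j \<le> 1")
  case True
  then show ?thesis using n1 by (cases j) auto
next
  case False
  define m where "m = j - 2"
  have j: "j = Suc (Suc m)" using False by (simp add: m_def)
  have "(g * g^(Suc m))$n = (h * h^(Suc m))$n"
    unfolding fps_mult_nth
  proof (rule sum.cong[OF refl])
    fix i assume i: "i \<in> {0..n}"
    show "g$i * (g^(Suc m))$(n-i) = h$i * (h^(Suc m))$(n-i)"
    proof (cases "i = 0 \<or> i = n")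
      case True
      then show ?thesis using g0 h0 by (auto simp: fps_power_zeroth)
    next
      case False
      then have "i < n" "0 < i" using i by auto
      then have "(g^(Suc m))$(n-i) = (h^(Suc m))$(n-i)"
        by (intro pow_local) (auto intro: eq)
      then show ?thesis using eq[OF \<open>i < n\<close>] by simp
    qed
  qed
  then show ?thesis using j by simp
qed

context fgl begin

definition Phi :: "'a fps \<Rightarrow> 'a fps" where "Phi s = subst21 F fps_X s"

lemma Phi_nth: "Phi s $ n = (\<Sum>i\<le>n. \<Sum>j\<le>n. F$j$i * (if n < i then 0 else (s^j)$(n-i)))"
  by (simp add: Phi_def subst21_def coeff2_def fps_X_power_mult_nth)

lemma Phi_local:
  assumes "\<And>k. k \<le> n \<Longrightarrow> g$k = h$k"
  shows "Phi g $ n = Phi h $ n"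
  unfolding Phi_nth
proof (intro sum.cong refl)
  fix i j assume "i \<in> {..n}" "j \<in> {..n}"
  have "(g^j)$(n-i) = (h^j)$(n-i)" by (rule pow_local) (use assms in auto)
  then show "F$j$i * (if n < i then 0 else (g^j)$(n-i)) = F$j$i * (if n < i then 0 else (h^j)$(n-i))" by simp
qed

lemma Phi_0: "Phi s $ 0 = 0"
  by (simp add: Phi_nth F00)

lemma Phi_top:
  assumes g0: "g$0 = 0" and h0: "h$0 = 0" and n1: "1 \<le> n" and eq: "\<And>k. k < n \<Longrightarrow> g$k = h$k"
  shows "Phi g $ n = Phi h $ n + (g$n - h$n)"
proof -
  have "Phi g $ n - Phi h $ n = (\<Sum>i\<le>n. \<Sum>j\<le>n. if 1 = j \<and> 0 = i then g$n - h$n else 0)"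
    unfolding Phi_nth sum_subtractf[symmetric] right_diff_distrib[symmetric]
  proof (intro sum.cong refl)
    fix i j assume "i \<in> {..n}" "j \<in> {..n}"
    show "F$j$i * ((if n < i then 0 else (g^j)$(n-i)) - (if n < i then 0 else (h^j)$(n-i))) =
          (if 1 = j \<and> 0 = i then g$n - h$n else 0)"
    proof (cases "i = 0")
      case True
      then show ?thesis using pow_top[OF g0 h0 n1 eq, of j] F10 by auto
    next
      case False
      have "(g^j)$(n-i) = (h^j)$(n-i)" if "i \<le> n"
        by (rule pow_local) (use False that in \<open>auto intro!: eq\<close>)
      then have "n < i \<or> (g^j)$(n-i) = (h^j)$(n-i)" by linarith
      then show ?thesis using False by auto
    qed
  qed
  also have "\<dots> = g$n - h$n" using n1 by (rule sum_delta2[where f="\<lambda>_ _. g$n - h$n", OF le0])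
  finally show ?thesis by (simp add: algebra_simps)
qed

fun tr :: "nat \<Rightarrow> 'a fps" where
  "tr 0 = 0"
| "tr (Suc n) = tr n + fps_const (- (Phi (tr n) $ Suc n)) * fps_X^(Suc n)"

lemma tr_hi: "n < k \<Longrightarrow> tr n $ k = 0"
  by (induct n) (auto simp: fps_X_power_nth)

lemma tr_step: "k \<le> n \<Longrightarrow> tr (Suc n) $ k = tr n $ k"
  by (auto simp: fps_X_power_nth)

lemma tr_stable: "k \<le> n \<Longrightarrow> n \<le> m \<Longrightarrow> tr m $ k = tr n $ k"
proof (induct m)
  case 0 then show ?case by simp
next
  case (Suc m)
  then show ?case by (cases "n = Suc m") (auto simp: tr_step)
qed

lemma tr_0: "tr n $ 0 = 0"
  by (induct n) (simp_all add: fps_X_power_nth)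

lemma tr_sol: "k \<le> n \<Longrightarrow> Phi (tr n) $ k = 0"
proof (induct n arbitrary: k)
  case 0 then show ?case by (simp add: Phi_0)
next
  case (Suc n)
  show ?case
  proof (cases "k \<le> n")
    case True
    have "Phi (tr (Suc n)) $ k = Phi (tr n) $ k"
      by (rule Phi_local, rule tr_step) (use True in simp)
    then show ?thesis using Suc True by simp
  next
    case False
    then have k: "k = Suc n" using Suc.prems by simp
    have "Phi (tr (Suc n)) $ Suc n = Phi (tr n) $ Suc n + (tr (Suc n) $ Suc n - tr n $ Suc n)"
      by (rule Phi_top) (auto simp: tr_0 tr_step)
    then show ?thesis using k by (simp add: tr_hi)
  qed
qed

definition iota0 :: "'a fps" where "iota0 = Abs_fps (\<lambda>k. tr k $ k)"

lemma iota0_prop: "iota0 $ 0 = 0 \<and> subst21 F fps_X iota0 = 0"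
proof
  show "iota0 $ 0 = 0" by (simp add: iota0_def tr_0)
  show "subst21 F fps_X iota0 = 0"
  proof (rule fps_ext)
    fix n
    have "Phi iota0 $ n = Phi (tr n) $ n"
    proof (rule Phi_local)
      fix k assume "k \<le> n"
      then show "iota0 $ k = tr n $ k" using tr_stable[of k k n] by (simp add: iota0_def)
    qed
    then show "subst21 F fps_X iota0 $ n = 0 $ n" using tr_sol[of n n] by (simp add: Phi_def)
  qed
qed

lemma Phi_unique:
  assumes "s$0 = 0" "Phi s = 0" "t$0 = 0" "Phi t = 0"
  shows "s = t"
proof -
  have "s$n = t$n" for n
  proof (induct n rule: less_induct)
    case (less n)
    show ?case
    proof (cases "n = 0")
      case True then show ?thesis using assms by simp
    next
      case False
      have "Phi s $ n = Phi t $ n + (s$n - t$n)"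
      proof (rule Phi_top)
        show "s$0 = 0" "t$0 = 0" using assms by auto
        show "1 \<le> n" using False by simp
        fix k assume "k < n" then show "s$k = t$k" by (rule less)
      qed
      then have "0 = s$n - t$n" using assms(2,4) by simp
      then show ?thesis by simp
    qed
  qed
  then show ?thesis by (simp add: fps_eq_iff)
qed

lemma inv_prop: "fgl_inv F $ 0 = 0" "subst21 F fps_X (fgl_inv F) = 0"
proof -
  have "fgl_inv F = iota0"
    unfolding fgl_inv_def
  proof (rule the_equality)
    show "iota0 $ 0 = 0 \<and> subst21 F fps_X iota0 = 0" by (rule iota0_prop)
    fix s assume a: "s $ 0 = 0 \<and> subst21 F fps_X s = 0"
    show "s = iota0"
    proof (rule Phi_unique)
      show "s$0 = 0" "iota0$0 = 0" using a iota0_prop by auto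
      show "Phi s = 0" "Phi iota0 = 0" using a iota0_prop unfolding Phi_def by auto
    qed
  qed
  then show "fgl_inv F $ 0 = 0" "subst21 F fps_X (fgl_inv F) = 0" using iota0_prop by auto
qed

end


lemma subst22_nth:
  "subst22 F g h $ b $ a = (\<Sum>i\<le>a+b. \<Sum>j\<le>a+b. F$j$i * (g^i * h^j) $ b $ a)"
  by (simp add: subst22_def coeff2_def)

lemma dg_subst22: "dg (subst22 F g h) = subst21 F (dg g) (dg h)"
proof (rule fps_ext)
  fix n
  have "dg (subst22 F g h) $ n = (\<Sum>b\<le>n. \<Sum>i\<le>n. \<Sum>j\<le>n. F$j$i * (g^i * h^j) $ b $ (n-b))"
    by (simp add: dg_nth subst22_nth)
  also have "\<dots> = (\<Sum>i\<le>n. \<Sum>j\<le>n. \<Sum>b\<le>n. F$j$i * (g^i * h^j) $ b $ (n-b))"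
    by (subst sum.swap, rule sum.cong[OF refl], rule sum.swap)
  also have "\<dots> = subst21 F (dg g) (dg h) $ n"
    by (simp add: subst21_def coeff2_def dg_power[symmetric] dg_mult[symmetric] dg_nth sum_distrib_left)
  finally show "dg (subst22 F g h) $ n = subst21 F (dg g) (dg h) $ n" .
qed

lemma dg_X2: "dg X2 = fps_X"
  by (simp add: X2_def dg_const)

lemma dg_lift: "dg (lift_y s) = s"
proof (rule fps_ext)
  fix n
  have "dg (lift_y s) $ n = (\<Sum>j\<le>n. if j = n then s$j else 0)"
    by (auto simp: dg_nth lift_y_nth intro!: sum.cong)
  then show "dg (lift_y s) $ n = s $ n" by simp
qed

definition UU :: "'a::comm_ring_1 fps fps \<Rightarrow> 'a fps fps" where
  "UU A = Abs_fps (\<lambda>l. Abs_fps (\<lambda>k. \<Sum>m\<le>l. A$(l-m)$(k+1+m)))"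

lemma UU_nth: "UU A $ l $ k = (\<Sum>m\<le>l. A$(l-m)$(k+1+m))"
  by (simp add: UU_def)

lemma X2_mult_nth: "(X2 * U) $ l $ k = (if k = 0 then 0 else U$l$(k-1))"
  by (simp add: X2_def fps_X_mult_nth)

lemma Y2_mult_nth: "(Y2 * U) $ l $ k = (if l = 0 then 0 else U$(l-1)$k)"
  by (simp add: Y2_def fps_X_mult_nth)

lemma div_diag: "A - lift_y (dg A) = (X2 - Y2) * UU A"
proof (intro fps_ext)
  fix l k
  have R: "((X2 - Y2) * UU A) $ l $ k = (if k = 0 then 0 else UU A$l$(k-1)) - (if l = 0 then 0 else UU A$(l-1)$k)"
    by (simp add: left_diff_distrib X2_mult_nth Y2_mult_nth)
  show "(A - lift_y (dg A)) $ l $ k = ((X2 - Y2) * UU A) $ l $ k"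
  proof (cases "k = 0")
    case True
    show ?thesis
    proof (cases l)
      case 0 then show ?thesis using True R by (simp add: lift_y_nth dg_nth)
    next
      case (Suc l')
      have "dg A $ l = A$l$0 + (\<Sum>j<l. A$j$(l-j))"
        by (simp add: dg_nth Suc lessThan_Suc_atMost[symmetric] del: lessThan_Suc_atMost)
      also have "(\<Sum>j<l. A$j$(l-j)) = (\<Sum>m<l. A$(l - Suc m)$(l - (l - Suc m)))"
        by (rule sum.nat_diff_reindex[symmetric])
      also have "\<dots> = UU A $ l' $ 0"
        by (simp add: UU_nth Suc lessThan_Suc_atMost Suc_diff_le)
      finally show ?thesis using True R Suc by (simp add: lift_y_nth)
    qed
  next
    case False
    then obtain k' where k: "k = Suc k'" by (cases k) auto
    show ?thesis
    proof (cases l)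
      case 0 then show ?thesis using R k by (simp add: lift_y_nth UU_nth)
    next
      case (Suc l')
      have "UU A $ l $ k' = A$l$k + (\<Sum>m\<le>l'. A$(l' - m)$(k+1+m))"
        by (simp only: UU_nth Suc sum.atMost_Suc_shift k) simp
      then show ?thesis using R k Suc by (simp add: lift_y_nth UU_nth)
    qed
  qed
qed



lemma subst12_add: "subst12 (A + B) E = subst12 A E + subst12 B E"
  by (intro fps_ext) (simp add: subst12_nth sum.distrib distrib_right)

lemma subst12_cmult: "subst12 (fps_const c * A) E = fps_const (fps_const c) * subst12 A E"
  by (intro fps_ext) (simp add: subst12_nth sum_distrib_left mult.assoc)

lemma prod_zero:
  fixes E T :: "'a::comm_ring_1 fps fps"
  assumes "\<And>a' b'. a' \<le> a \<Longrightarrow> b' \<le> b \<Longrightarrow> T$b'$a' = 0"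
  shows "(E * T)$b$a = 0"
  using assms by (auto simp: fps_mult_nth fps_sum_nth intro!: sum.neutral)

lemma subst12_X:
  assumes E0: "E$0$0 = 0"
  shows "subst12 (fps_X * N) E = E * subst12 N E"
proof (intro fps_ext)
  fix b a :: nat
  let ?K = "a + b"
  let ?S = "\<Sum>i\<le>?K. fps_const (fps_const (N$i)) * E^i"
  have agree: "(subst12 N E - ?S) $ b' $ a' = 0" if "a' \<le> a" "b' \<le> b" for a' b'
  proof -
    have "subst12 N E $ b' $ a' = (\<Sum>i\<le>a'+b'. N$i * (E^i)$b'$a')" by (simp add: subst12_nth)
    also have "\<dots> = (\<Sum>i\<le>?K. N$i * (E^i)$b'$a')"
      using that by (intro sum.mono_neutral_left) (auto simp: order_power[OF E0])
    also have "\<dots> = ?S $ b' $ a'" by (simp add: fps_sum_nth)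
    finally show ?thesis by simp
  qed
  have "(E * subst12 N E) $ b $ a = (E * ?S) $ b $ a + (E * (subst12 N E - ?S)) $ b $ a"
    by (simp add: algebra_simps)
  also have "(E * (subst12 N E - ?S)) $ b $ a = 0"
    by (rule prod_zero) (rule agree)
  also have "E * ?S = (\<Sum>i\<le>?K. fps_const (fps_const (N$i)) * E^(Suc i))"
    by (simp add: sum_distrib_left algebra_simps)
  also have "(\<Sum>i\<le>?K. fps_const (fps_const (N$i)) * E^(Suc i)) $ b $ a = (\<Sum>i\<le>?K. N$i * (E^(Suc i))$b$a)"
    by (simp add: fps_sum_nth)
  also have "\<dots> = (\<Sum>i<?K. N$i * (E^(Suc i))$b$a)"
    using order_power[OF E0, of a b "Suc ?K"] by (simp add: lessThan_Suc_atMost[symmetric] del: lessThan_Suc_atMost)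
  also have "\<dots> = (\<Sum>i\<le>?K. (fps_X * N)$i * (E^i)$b$a)"
    by (simp add: sum.atMost_shift fps_X_mult_nth)
  also have "\<dots> = subst12 (fps_X * N) E $ b $ a" by (simp add: subst12_nth)
  finally show "subst12 (fps_X * N) E $ b $ a = (E * subst12 N E) $ b $ a" by simp
qed

lemma subst12_Xpow:
  assumes E0: "E$0$0 = 0"
  shows "subst12 (fps_X^k * N) E = E^k * subst12 N E"
proof (induct k)
  case 0 then show ?case by simp
next
  case (Suc k)
  have "subst12 (fps_X^Suc k * N) E = subst12 (fps_X * (fps_X^k * N)) E" by (simp add: mult.assoc)
  also have "\<dots> = E * (E^k * subst12 N E)" by (simp add: subst12_X[OF E0] Suc)
  finally show ?case by (simp add: mult.assoc)
qed

lemma binom_p: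
  fixes a b :: "'a::comm_ring_1"
  assumes p: "prime p"
  shows "\<exists>V. (a - b)^p = a^p - b^p + of_nat p * V"
proof -
  obtain q where q: "p = Suc q" using prime_gt_0_nat[OF p] by (cases p) auto
  have q1: "1 \<le> q" using prime_ge_2_nat[OF p] q by simp
  let ?f = "\<lambda>k. of_nat (p choose k) * a^k * (-b)^(p-k)"
  have "(a - b)^p = (\<Sum>k\<le>p. ?f k)"
    using binomial_ring[of a "-b" p] by simp
  also have "\<dots> = ?f 0 + (\<Sum>k<q. ?f (Suc k)) + ?f p"
    by (simp only: q sum.atMost_Suc[where n=q] sum.atMost_shift[where n=q])
  also have "(\<Sum>k<q. ?f (Suc k)) = of_nat p * (\<Sum>k<q. of_nat ((p choose Suc k) div p) * a^Suc k * (-b)^(p - Suc k))"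
  proof -
    have "\<And>k. k < q \<Longrightarrow> of_nat (p choose Suc k) = (of_nat p * of_nat ((p choose Suc k) div p) :: 'a)"
    proof -
      fix k assume "k < q"
      then have "p dvd (p choose Suc k)" using p q by (intro dvd_choose_prime) auto
      then show "of_nat (p choose Suc k) = (of_nat p * of_nat ((p choose Suc k) div p) :: 'a)"
        by (simp flip: of_nat_mult)
    qed
    then show ?thesis by (simp add: sum_distrib_left mult.assoc)
  qed
  finally have e: "(a - b)^p = (-b)^p + of_nat p * (\<Sum>k<q. of_nat ((p choose Suc k) div p) * a^Suc k * (-b)^(p - Suc k)) + a^p"
    by simp
  obtain W where W: "(-b)^p = - (b^p) + of_nat p * W"
  proof (cases "p = 2")
    case True
    then show ?thesis using that[of "b^2"] by (simp add: algebra_simps)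
  next
    case False
    then have "p > 2" using prime_ge_2_nat[OF p] by simp
    then have "odd p" by (rule prime_odd_nat[OF p])
    then show ?thesis using that[of 0] by (simp add: power_minus_odd)
  qed
  show ?thesis using e W
    by (intro exI[of _ "W + (\<Sum>k<q. of_nat ((p choose Suc k) div p) * a^Suc k * (-b)^(p - Suc k))"])
       (simp add: algebra_simps)
qed



lemma lift_y_0: "lift_y 0 = 0"
  by (intro fps_ext) (simp add: lift_y_nth)

theorem lemma8:
  fixes F :: "'a::comm_ring_1 fps fps" and p :: nat
  assumes "prime p" and "formal_group_law F"
  shows "\<exists>A B :: 'a fps fps.
           subst12 (fgl_mult F p) (subst22 F X2 (lift_y (fgl_inv F)))
             = (X2 ^ p - Y2 ^ p) * A + of_nat p * B"
proof -
  interpret fgl F by (rule fgl.intro) (rule assms(2))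
  have p: "prime p" by (rule assms(1))
  define M where "M = fgl_mult F p"
  define D where "D = subst22 F X2 (lift_y (fgl_inv F))"
  have D0: "D$0$0 = 0" by (simp add: D_def subst22_nth F00)
  have "dg D = subst21 F fps_X (fgl_inv F)"
    by (simp add: D_def dg_subst22 dg_X2 dg_lift)
  then have dgD: "dg D = 0" using inv_prop by simp
  have DU: "D = (X2 - Y2) * UU D"
    using div_diag[of D] by (simp add: dgD lift_y_0)
  have M0: "M$0 = 0" using mult_coeffs(1)[OF p] by (simp add: M_def)
  have Mdvd: "\<And>k. \<not> p dvd k \<Longrightarrow> of_nat p dvd M$k" using mult_coeffs(2)[OF p] by (simp add: M_def)
  define M1 where "M1 = Abs_fps (\<lambda>k. if p dvd k then M$k else 0)"
  define M2 where "M2 = Abs_fps (\<lambda>k. if p dvd k then 0 else (SOME c. M$k = of_nat p * c))"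
  define N where "N = Abs_fps (\<lambda>k. M1$(k+p))"
  have MM: "M = M1 + fps_const (of_nat p) * M2"
  proof (rule fps_ext)
    fix k
    show "M$k = (M1 + fps_const (of_nat p) * M2)$k"
    proof (cases "p dvd k")
      case True then show ?thesis by (simp add: M1_def M2_def)
    next
      case False
      then have "\<exists>c. M$k = of_nat p * c" using Mdvd[OF False] by (auto simp: dvd_def)
      then have "M$k = of_nat p * (SOME c. M$k = of_nat p * c)" by (rule someI_ex)
      then show ?thesis using False by (simp add: M1_def M2_def)
    qed
  qed
  have M1N: "M1 = fps_X^p * N"
  proof (rule fps_ext)
    fix k
    show "M1$k = (fps_X^p * N)$k"
    proof (cases "k < p")
      case True
      have "M1$k = 0"
      proof (cases "k = 0")
        case True then show ?thesis using M0 by (simp add: M1_def)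
      next
        case False
        then have "\<not> p dvd k" using \<open>k < p\<close> by (auto dest: dvd_imp_le)
        then show ?thesis by (simp add: M1_def)
      qed
      then show ?thesis using True by (simp add: fps_X_power_mult_nth)
    next
      case False
      then show ?thesis by (simp add: fps_X_power_mult_nth N_def)
    qed
  qed
  have ofp: "(of_nat p :: 'a fps fps) = fps_const (fps_const (of_nat p))"
    by (simp only: fps_of_nat)
  have eq: "subst12 M D = D^p * subst12 N D + of_nat p * subst12 M2 D"
    by (simp add: MM M1N subst12_add subst12_cmult subst12_Xpow[OF D0] ofp)
  obtain V where V: "(X2 - Y2)^p = X2^p - Y2^p + of_nat p * (V :: 'a fps fps)"
    using binom_p[OF p] by blast
  have Dp: "D^p = (X2^p - Y2^p + of_nat p * V) * UU D ^ p"
    using arg_cong[OF DU, of "\<lambda>z. z^p"] by (simp add: power_mult_distrib V)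
  then have "subst12 M D = (X2^p - Y2^p) * (UU D ^ p * subst12 N D)
      + of_nat p * (V * UU D ^ p * subst12 N D + subst12 M2 D)"
    unfolding eq Dp by (simp add: algebra_simps)
  then show ?thesis unfolding M_def D_def by blast
qed


end
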